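(* Let $r\ge 3$, $\varepsilon>0$, and let $G$ be an $n$-vertex maximal $K_r$-free graph with minimum degree $\delta(G)\ge\left(\frac{2r-5}{2r-3}+\varepsilon\right)n$. Then $G$ is $\varepsilon^{r-2}$-ultra maximal $K_r$-free.
   Context: An $n$-vertex graph $G$ is $\alpha$-ultra maximal $K_r$-free if it is $K_r$-free and for every pair of non-adjacent vertices $u,v$, the induced subgraph $G[N(u)\cap N(v)]$ contains at least $\alpha n^{r-2}$ copies of $K_{r-2}$. A graph is maximal $K_r$-free if it is $K_r$-free and adding any new edge creates a $K_r$. *)

theory Defs
  imports Complex_Main
begin

definition graph :: "'a set \<Rightarrow> ('a \<Rightarrow> 'a \<Rightarrow> bool) \<Rightarrow> bool" where
  "graph V E \<longleftrightarrow> finite V \<and> (\<forall>u v. E u v \<longrightarrow> u \<in> V \<and> v \<in> V \<and> u \<noteq> v \<and> E v u)"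

definition neighbours :: "'a set \<Rightarrow> ('a \<Rightarrow> 'a \<Rightarrow> bool) \<Rightarrow> 'a \<Rightarrow> 'a set" where
  "neighbours V E v = {u \<in> V. E v u}"

definition degree :: "'a set \<Rightarrow> ('a \<Rightarrow> 'a \<Rightarrow> bool) \<Rightarrow> 'a \<Rightarrow> nat" where
  "degree V E v = card (neighbours V E v)"

definition cliques_in :: "('a \<Rightarrow> 'a \<Rightarrow> bool) \<Rightarrow> 'a set \<Rightarrow> nat \<Rightarrow> 'a set set" where
  "cliques_in E S k = {K. K \<subseteq> S \<and> card K = k \<and> (\<forall>x\<in>K. \<forall>y\<in>K. x \<noteq> y \<longrightarrow> E x y)}"

definition Kr_free :: "'a set \<Rightarrow> ('a \<Rightarrow> 'a \<Rightarrow> bool) \<Rightarrow> nat \<Rightarrow> bool" where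
  "Kr_free V E r \<longleftrightarrow> cliques_in E V r = {}"

definition add_edge :: "('a \<Rightarrow> 'a \<Rightarrow> bool) \<Rightarrow> 'a \<Rightarrow> 'a \<Rightarrow> ('a \<Rightarrow> 'a \<Rightarrow> bool)" where
  "add_edge E u v = (\<lambda>x y. E x y \<or> (x = u \<and> y = v) \<or> (x = v \<and> y = u))"

definition maximal_Kr_free :: "'a set \<Rightarrow> ('a \<Rightarrow> 'a \<Rightarrow> bool) \<Rightarrow> nat \<Rightarrow> bool" where
  "maximal_Kr_free V E r \<longleftrightarrow> Kr_free V E r \<and>
     (\<forall>u\<in>V. \<forall>v\<in>V. u \<noteq> v \<longrightarrow> \<not> E u v \<longrightarrow> \<not> Kr_free V (add_edge E u v) r)"

definition ultra_maximal_Kr_free :: "real \<Rightarrow> 'a set \<Rightarrow> ('a \<Rightarrow> 'a \<Rightarrow> bool) \<Rightarrow> nat \<Rightarrow> bool" where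
  "ultra_maximal_Kr_free \<alpha> V E r \<longleftrightarrow> Kr_free V E r \<and>
     (\<forall>u\<in>V. \<forall>v\<in>V. u \<noteq> v \<longrightarrow> \<not> E u v \<longrightarrow>
        real (card (cliques_in E (neighbours V E u \<inter> neighbours V E v) (r - 2)))
          \<ge> \<alpha> * real (card V) ^ (r - 2))"

end

theory Submission
  imports Defs
begin

lemma dc_swap:
  assumes "finite X" "finite Y"
  shows "(\<Sum>x\<in>X. card {y\<in>Y. R x y}) = (\<Sum>y\<in>Y. card {x\<in>X. R x y})"
proof -
  have "(\<Sum>x\<in>X. card {y\<in>Y. R x y}) = (\<Sum>x\<in>X. \<Sum>y\<in>Y. if R x y then 1 else 0)"
    using assms by (simp add: sum.inter_filter[symmetric])
  also have "\<dots> = (\<Sum>y\<in>Y. \<Sum>x\<in>X. if R x y then 1 else 0)" by (rule sum.swap)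
  also have "\<dots> = (\<Sum>y\<in>Y. card {x\<in>X. R x y})"
    using assms by (simp add: sum.inter_filter[symmetric])
  finally show ?thesis .
qed

locale ctx =
  fixes V :: "'a set" and E :: "'a \<Rightarrow> 'a \<Rightarrow> bool" and r :: nat and eps :: real and u v :: 'a
  assumes G: "graph V E" and r3: "r \<ge> 3" and epos: "eps > 0" and free: "Kr_free V E r"
    and deg: "\<forall>x\<in>V. real (degree V E x) \<ge> ((2 * real r - 5) / (2 * real r - 3) + eps) * real (card V)"
    and uV: "u \<in> V" and vV: "v \<in> V" and uv: "u \<noteq> v" and nuv: "\<not> E u v"
begin

definition W where "W = neighbours V E u \<inter> neighbours V E v"
definition k where "k = r - 2"
definition A where "A j = {Q. \<exists>K\<in>cliques_in E W k. Q \<subseteq> K \<and> card Q = j}"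

lemma finV: "finite V" using G by (simp add: graph_def)
lemma sym: "E x y \<Longrightarrow> E y x" using G by (simp add: graph_def)
lemma irr: "\<not> E x x" using G by (auto simp: graph_def)
lemma EV: "E x y \<Longrightarrow> x \<in> V \<and> y \<in> V" using G by (simp add: graph_def)
lemma WV: "W \<subseteq> V" by (auto simp: W_def neighbours_def)
lemma finW: "finite W" using WV finV finite_subset by blast
lemma inW: "x \<in> W \<Longrightarrow> E u x \<and> E v x" by (auto simp: W_def neighbours_def)
lemma uW: "u \<notin> W" using inW irr by blast
lemma vW: "v \<notin> W" using inW irr by blast
lemma k1: "k \<ge> 1" "r = k + 2" using r3 by (auto simp: k_def)

lemma setD: "{z\<in>S. \<not> P z} = {x} \<Longrightarrow> z \<in> S \<Longrightarrow> z \<noteq> x \<Longrightarrow> P z"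
  by blast

lemma no_clique: "S \<subseteq> V \<Longrightarrow> card S = r \<Longrightarrow> \<forall>x\<in>S. \<forall>y\<in>S. x\<noteq>y \<longrightarrow> E x y \<Longrightarrow> False"
  using free by (auto simp: Kr_free_def cliques_in_def)

lemma cliqueD:
  assumes "K \<in> cliques_in E W k"
  shows "K \<subseteq> W" "card K = k" "finite K" "\<And>x y. x \<in> K \<Longrightarrow> y \<in> K \<Longrightarrow> x \<noteq> y \<Longrightarrow> E x y"
  using assms finW finite_subset by (auto simp: cliques_in_def)

lemma no_ext:
  assumes K: "K \<in> cliques_in E W k" and a: "a = u \<or> a = v" and y: "y \<in> V"
    and all: "\<forall>z\<in>insert a K. E y z"
  shows False
proof -
  note Kc = cliqueD[OF K]
  have aK: "a \<notin> K" using a Kc(1) uW vW by blast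
  have yK: "y \<notin> insert a K" using all irr by blast
  have c: "card (insert y (insert a K)) = r"
    using aK yK Kc k1 by simp
  have s: "insert y (insert a K) \<subseteq> V" using y a uV vV Kc(1) WV by blast
  have "\<forall>x\<in>insert y (insert a K). \<forall>z\<in>insert y (insert a K). x\<noteq>z \<longrightarrow> E x z"
  proof (intro ballI impI)
    fix x z assume x: "x \<in> insert y (insert a K)" and z: "z \<in> insert y (insert a K)" and xz: "x \<noteq> z"
    have aE: "\<And>t. t \<in> K \<Longrightarrow> E a t" using a Kc(1) inW by blast
    show "E x z" using x z xz all aE Kc(4) sym by blast
  qed
  then show False using no_clique[OF s c] by blast
qed

lemma count:
  assumes K: "K \<in> cliques_in E W k" and QK: "Q \<subseteq> K" and cQ: "card Q = j" and jk: "j < k"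
  shows "real (k - j) * eps * real (card V) \<le>
     real (card {y\<in>V. \<exists>x\<in>K-Q. {z\<in>insert u (insert v K). \<not> E y z} = {x}})"
proof -
  note Kc = cliqueD[OF K]
  define C where "C = insert u (insert v K)"
  define w where "w x = (if x \<in> Q then 2 else 1::real)" for x
  define D where "D y = {z\<in>C. \<not> E y z}" for y
  define Gs where "Gs = {y\<in>V. \<exists>x\<in>K-Q. {z\<in>insert u (insert v K). \<not> E y z} = {x}}"
  define dn where "dn = ((2 * real r - 5) / (2 * real r - 3) + eps) * real (card V)"
  have uK: "u \<notin> K" using Kc(1) uW by blast
  have vK: "v \<notin> K" using Kc(1) vW by blast
  have finC: "finite C" using Kc(3) by (simp add: C_def)
  have CV: "C \<subseteq> V" using Kc(1) WV uV vV by (auto simp: C_def)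
  have cardC: "card C = r" using uK vK uv Kc k1 by (simp add: C_def)
  have QC: "Q \<subseteq> C" using QK by (auto simp: C_def)
  have finQ: "finite Q" using QK Kc(3) finite_subset by blast
  have sumw: "(\<Sum>x\<in>C. w x) = real r + real j"
  proof -
    have "(\<Sum>x\<in>C. w x) = (\<Sum>x\<in>C - Q. w x) + (\<Sum>x\<in>Q. w x)"
      using sum.subset_diff[OF QC finC] by simp
    also have "\<dots> = real (card (C - Q)) + 2 * real (card Q)"
      by (simp add: w_def)
    also have "card (C - Q) = r - j" using card_Diff_subset[OF finQ QC] cardC cQ by simp
    finally show ?thesis using cQ cardC k1 jk by simp
  qed
  have lower: "(\<Sum>x\<in>C. w x * real (degree V E x)) \<ge> (real r + real j) * dn"
  proof -
    have "(\<Sum>x\<in>C. w x * dn) \<le> (\<Sum>x\<in>C. w x * real (degree V E x))"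
      apply (rule sum_mono)
      using deg CV by (auto simp: w_def dn_def)
    then show ?thesis using sumw by (simp add: sum_distrib_right[symmetric])
  qed
  have swap: "(\<Sum>x\<in>C. w x * real (degree V E x)) = (\<Sum>y\<in>V. \<Sum>x\<in>C. if E y x then w x else 0)"
  proof -
    have "\<And>x. w x * real (degree V E x) = (\<Sum>y\<in>V. if E y x then w x else 0)"
    proof -
      fix x
      have "{y\<in>V. E x y} = {y\<in>V. E y x}" using sym by blast
      then have "real (degree V E x) = real (card {y\<in>V. E y x})"
        by (simp add: degree_def neighbours_def)
      also have "\<dots> = (\<Sum>y\<in>{y\<in>V. E y x}. 1)" by simp
      also have "\<dots> = (\<Sum>y\<in>V. if E y x then 1 else 0)"
        using finV by (rule sum.inter_filter)
      finally have "w x * real (degree V E x) = w x * (\<Sum>y\<in>V. if E y x then 1 else 0)" by simp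
      also have "\<dots> = (\<Sum>y\<in>V. w x * (if E y x then 1 else 0))" by (rule sum_distrib_left)
      also have "\<dots> = (\<Sum>y\<in>V. if E y x then w x else 0)" by (rule sum.cong) auto
      finally show "w x * real (degree V E x) = (\<Sum>y\<in>V. if E y x then w x else 0)" .
    qed
    then have "(\<Sum>x\<in>C. w x * real (degree V E x)) = (\<Sum>x\<in>C. \<Sum>y\<in>V. if E y x then w x else 0)"
      by simp
    also have "\<dots> = (\<Sum>y\<in>V. \<Sum>x\<in>C. if E y x then w x else 0)" by (rule sum.swap)
    finally show ?thesis .
  qed
  have each: "(\<Sum>x\<in>C. if E y x then w x else 0) \<le> real r + real j - 2 + (if y \<in> Gs then 1 else 0)"
    if yV: "y \<in> V" for y
  proof -
    have split: "(\<Sum>x\<in>C. if E y x then w x else 0) = (\<Sum>x\<in>C. w x) - (\<Sum>x\<in>D y. w x)"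
    proof -
      have "(\<Sum>x\<in>C. w x) = (\<Sum>x\<in>C. if E y x then w x else 0) + (\<Sum>x\<in>C. if \<not> E y x then w x else 0)"
        by (simp add: sum.distrib[symmetric]) (rule sum.cong, auto)
      moreover have "(\<Sum>x\<in>C. if \<not> E y x then w x else 0) = (\<Sum>x\<in>D y. w x)"
        using finC by (simp add: D_def sum.inter_filter)
      ultimately show ?thesis by simp
    qed
    have finD: "finite (D y)" using finC by (simp add: D_def)
    have ge: "(\<Sum>x\<in>D y. w x) \<ge> real (card (D y))"
    proof -
      have "(\<Sum>x\<in>D y. (1::real)) \<le> (\<Sum>x\<in>D y. w x)" by (rule sum_mono) (simp add: w_def)
      then show ?thesis by simp
    qed
    have ne: "D y \<noteq> {}"
    proof
      assume "D y = {}"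
      then have "\<forall>z\<in>insert u K. E y z" by (auto simp: D_def C_def)
      then show False using no_ext[OF K _ yV, of u] by blast
    qed
    have key: "(\<Sum>x\<in>D y. w x) \<ge> 2 - (if y \<in> Gs then 1 else 0)"
    proof (cases "card (D y) \<ge> 2")
      case True then show ?thesis using ge by simp
    next
      case False
      with ne finD have "card (D y) = 1"
        by (metis One_nat_def Suc_1 card_0_eq less_2_cases not_le)
      then obtain d where d: "D y = {d}" using card_1_singletonE by blast
      then have dC: "d \<in> C" by (auto simp: D_def)
      show ?thesis
      proof (cases "d \<in> Q")
        case True then show ?thesis using d by (simp add: w_def)
      next
        case dQ: False
        have "d \<noteq> u"
        proof
          assume da: "d = u"
          have "\<forall>z\<in>insert v K. E y z"
          proof
            fix z assume z: "z \<in> insert v K"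
            have "z \<in> C" "z \<noteq> u" using z uK vK uv by (auto simp: C_def)
            then show "E y z" using d da unfolding D_def by blast
          qed
          then show False using no_ext[OF K _ yV, of v] by blast
        qed
        moreover have "d \<noteq> v"
        proof
          assume da: "d = v"
          have "\<forall>z\<in>insert u K. E y z"
          proof
            fix z assume z: "z \<in> insert u K"
            have "z \<in> C" "z \<noteq> v" using z uK vK uv by (auto simp: C_def)
            then show "E y z" using d da unfolding D_def by blast
          qed
          then show False using no_ext[OF K _ yV, of u] by blast
        qed
        ultimately have "d \<in> K - Q" using dC dQ by (auto simp: C_def)
        then have "y \<in> Gs" using d yV by (auto simp: Gs_def D_def C_def)
        then show ?thesis using ge \<open>card (D y) = 1\<close> by simp
      qed
    qed
    show ?thesis using split sumw key by simp
  qed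
  have GV: "Gs \<subseteq> V" by (auto simp: Gs_def)
  have "(real r + real j) * dn \<le> (\<Sum>y\<in>V. real r + real j - 2 + (if y \<in> Gs then 1 else 0))"
    using lower swap each sum_mono[of V] by (smt (verit, ccfv_SIG) sum_mono)
  also have "\<dots> = (real r + real j - 2) * real (card V) + real (card Gs)"
    using finV GV by (simp add: sum.distrib sum.If_cases Int_absorb1 Int_absorb2)
  finally have main: "(real r + real j) * dn \<le> (real r + real j - 2) * real (card V) + real (card Gs)" .
  have r3': "2 * real r - 3 > 0" using r3 by simp
  have jr: "real j \<le> real r - 3" using jk k1 by simp
  have coef: "(real r + real j) * ((2 * real r - 5) / (2 * real r - 3)) - (real r + real j - 2) \<ge> 0"
  proof -
    have "(real r + real j) * ((2 * real r - 5) / (2 * real r - 3)) - (real r + real j - 2)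
        = (2 * real r - 6 - 2 * real j) / (2 * real r - 3)"
      using r3' by (simp add: field_simps)
    also have "\<dots> \<ge> 0" using r3' jr by simp
    finally show ?thesis .
  qed
  have kj: "real (k - j) \<le> real r + real j" using jk k1 by simp
  have "real (k - j) * eps * real (card V) \<le> (real r + real j) * eps * real (card V)"
    using kj epos by (simp add: mult_right_mono)
  also have "\<dots> \<le> ((real r + real j) * ((2 * real r - 5) / (2 * real r - 3)) - (real r + real j - 2)) * real (card V)
        + (real r + real j) * eps * real (card V)"
    using coef by simp
  also have "\<dots> = (real r + real j) * dn - (real r + real j - 2) * real (card V)"
    by (simp add: dn_def algebra_simps)
  also have "\<dots> \<le> real (card Gs)" using main by simp
  finally show ?thesis by (simp add: Gs_def)
qed

lemma finA: "finite (A j)"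
proof -
  have "A j \<subseteq> Pow W" by (auto simp: A_def cliques_in_def)
  then show ?thesis using finW finite_subset by blast
qed

lemma ext:
  assumes Q: "Q \<in> A j" and jk: "j < k"
  shows "real (k - j) * eps * real (card V) \<le> real (card {Q'\<in>A (Suc j). Q \<subseteq> Q'})"
proof -
  obtain K where K: "K \<in> cliques_in E W k" and QK: "Q \<subseteq> K" and cQ: "card Q = j"
    using Q by (auto simp: A_def)
  note Kc = cliqueD[OF K]
  define Gs where "Gs = {y\<in>V. \<exists>x\<in>K-Q. {z\<in>insert u (insert v K). \<not> E y z} = {x}}"
  have uK: "u \<notin> K" using Kc(1) uW by blast
  have vK: "v \<notin> K" using Kc(1) vW by blast
  have finQ: "finite Q" using QK Kc(3) finite_subset by blast
  have inj: "inj_on (\<lambda>y. insert y Q) Gs"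
  proof (rule inj_onI)
    fix y y' assume y: "y \<in> Gs" and y': "y' \<in> Gs" and eq: "insert y Q = insert y' Q"
    have "y \<notin> Q" "y' \<notin> Q"
    proof -
      obtain x where x: "x \<in> K - Q" "{z\<in>insert u (insert v K). \<not> E y z} = {x}" using y by (auto simp: Gs_def)
      have "\<forall>z\<in>Q. E y z" using x QK by (auto intro: setD[OF x(2)])
      then show "y \<notin> Q" using irr by blast
    next
      obtain x where x: "x \<in> K - Q" "{z\<in>insert u (insert v K). \<not> E y' z} = {x}" using y' by (auto simp: Gs_def)
      have "\<forall>z\<in>Q. E y' z" using x QK by (auto intro: setD[OF x(2)])
      then show "y' \<notin> Q" using irr by blast
    qed
    then show "y = y'" using eq by blast
  qed
  have img: "(\<lambda>y. insert y Q) ` Gs \<subseteq> {Q'\<in>A (Suc j). Q \<subseteq> Q'}"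
  proof
    fix Q' assume "Q' \<in> (\<lambda>y. insert y Q) ` Gs"
    then obtain y where y: "y \<in> Gs" and Q': "Q' = insert y Q" by blast
    obtain x where x: "x \<in> K - Q" and D: "{z\<in>insert u (insert v K). \<not> E y z} = {x}" and yV: "y \<in> V"
      using y by (auto simp: Gs_def)
    have Eyu: "E y u" using x uK by (auto intro: setD[OF D])
    have Eyv: "E y v" using x vK by (auto intro: setD[OF D])
    have EyK: "\<And>z. z \<in> K \<Longrightarrow> z \<noteq> x \<Longrightarrow> E y z" by (auto intro: setD[OF D])
    have yW: "y \<in> W" using Eyu Eyv sym yV by (auto simp: W_def neighbours_def)
    have yKx: "y \<notin> K - {x}" using EyK irr by blast
    have yQ: "y \<notin> Q" using EyK irr x QK by blast
    define K' where "K' = insert y (K - {x})"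
    have "K' \<in> cliques_in E W k"
    proof -
      have "K' \<subseteq> W" using yW Kc(1) by (auto simp: K'_def)
      moreover have "card K' = k" using yKx Kc(2,3) x k1 by (simp add: K'_def)
      moreover have "\<forall>a\<in>K'. \<forall>b\<in>K'. a \<noteq> b \<longrightarrow> E a b"
        using EyK Kc(4) sym by (auto simp: K'_def)
      ultimately show ?thesis by (simp add: cliques_in_def)
    qed
    moreover have "Q' \<subseteq> K'" using Q' QK x by (auto simp: K'_def)
    moreover have "card Q' = Suc j" using Q' yQ finQ cQ by simp
    ultimately show "Q' \<in> {Q'\<in>A (Suc j). Q \<subseteq> Q'}" using Q' by (auto simp: A_def)
  qed
  have "card Gs \<le> card {Q'\<in>A (Suc j). Q \<subseteq> Q'}"
    using card_inj_on_le[OF inj img] finA by simp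
  moreover have "real (k - j) * eps * real (card V) \<le> real (card Gs)"
    using count[OF K QK cQ jk] by (simp add: Gs_def)
  ultimately show ?thesis by linarith
qed

lemma grow:
  assumes K0: "K0 \<in> cliques_in E W k" and jk: "j \<le> k"
  shows "real (card (A j)) \<ge> real (k choose j) * (eps * real (card V)) ^ j"
  using jk
proof (induction j)
  case 0
  have "A 0 = {{}}"
  proof -
    have "{} \<in> A 0" using K0 by (auto simp: A_def)
    moreover have "Q = {}" if QA: "Q \<in> A 0" for Q
    proof -
      obtain K where K: "K \<in> cliques_in E W k" "Q \<subseteq> K" "card Q = 0" using QA unfolding A_def by blast
      then have "finite Q" using cliqueD(3)[OF K(1)] finite_subset by blast
      then show ?thesis using K(3) by simp
    qed
    ultimately show ?thesis by blast
  qed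
  then show ?case by simp
next
  case (Suc j)
  then have jk: "j < k" by simp
  have IH: "real (card (A j)) \<ge> real (k choose j) * (eps * real (card V)) ^ j" using Suc by simp
  have dc: "(\<Sum>Q\<in>A j. card {Q'\<in>A (Suc j). Q \<subseteq> Q'}) = (\<Sum>Q'\<in>A (Suc j). card {Q\<in>A j. Q \<subseteq> Q'})"
    using dc_swap[OF finA finA] .
  have up: "card {Q\<in>A j. Q \<subseteq> Q'} \<le> Suc j" if Q': "Q' \<in> A (Suc j)" for Q'
  proof -
    have cQ': "card Q' = Suc j" using Q' by (auto simp: A_def)
    then have fQ': "finite Q'" by (metis card.infinite nat.distinct(1))
    have "{Q\<in>A j. Q \<subseteq> Q'} \<subseteq> {B. B \<subseteq> Q' \<and> card B = j}" by (auto simp: A_def)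
    then have "card {Q\<in>A j. Q \<subseteq> Q'} \<le> card {B. B \<subseteq> Q' \<and> card B = j}"
      using fQ' by (intro card_mono) auto
    also have "\<dots> = Suc j" using n_subsets[OF fQ'] cQ' by simp
    finally show ?thesis .
  qed
  have "real (card (A j)) * (real (k - j) * eps * real (card V)) \<le> (\<Sum>Q\<in>A j. real (card {Q'\<in>A (Suc j). Q \<subseteq> Q'}))"
  proof -
    have "(\<Sum>Q\<in>A j. real (k - j) * eps * real (card V)) \<le> (\<Sum>Q\<in>A j. real (card {Q'\<in>A (Suc j). Q \<subseteq> Q'}))"
      by (rule sum_mono) (rule ext[OF _ jk])
    then show ?thesis by simp
  qed
  also have "\<dots> = real (\<Sum>Q'\<in>A (Suc j). card {Q\<in>A j. Q \<subseteq> Q'})"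
    by (simp only: dc[symmetric] of_nat_sum)
  also have "\<dots> \<le> real (\<Sum>Q'\<in>A (Suc j). Suc j)"
    by (rule of_nat_mono, rule sum_mono, rule up)
  also have "\<dots> = real (card (A (Suc j))) * real (Suc j)" by (simp add: algebra_simps)
  finally have A1: "real (card (A j)) * (real (k - j) * eps * real (card V)) \<le> real (card (A (Suc j))) * real (Suc j)" .
  have nn: "real (k - j) * eps * real (card V) \<ge> 0" using epos by simp
  have "real (k choose j) * (eps * real (card V)) ^ j * (real (k - j) * eps * real (card V))
      \<le> real (card (A j)) * (real (k - j) * eps * real (card V))"
    using IH nn by (rule mult_right_mono)
  also have "real (k choose j) * (eps * real (card V)) ^ j * (real (k - j) * eps * real (card V))
      = real ((k - j) * (k choose j)) * (eps * real (card V)) ^ Suc j"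
    unfolding of_nat_mult power_Suc by (simp only: mult_ac)
  also have "(k - j) * (k choose j) = Suc j * (k choose Suc j)"
    using binomial_absorb_comp[of k j] binomial_absorption[of j k] by simp
  finally have "real (Suc j) * (real (k choose Suc j) * (eps * real (card V)) ^ Suc j) \<le> real (Suc j) * real (card (A (Suc j)))"
    using A1 by (simp add: algebra_simps)
  then show ?case by (rule mult_left_le_imp_le) simp
qed

lemma final:
  assumes K0: "K0 \<in> cliques_in E W k"
  shows "real (card (cliques_in E W (r - 2))) \<ge> eps ^ (r - 2) * real (card V) ^ (r - 2)"
proof -
  have "A k = cliques_in E W k"
  proof
    show "A k \<subseteq> cliques_in E W k"
    proof
      fix Q assume "Q \<in> A k"
      then obtain K where K: "K \<in> cliques_in E W k" "Q \<subseteq> K" "card Q = k" by (auto simp: A_def)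
      then have "Q = K" using cliqueD[OF K(1)] by (metis card_subset_eq)
      then show "Q \<in> cliques_in E W k" using K by simp
    qed
  next
    show "cliques_in E W k \<subseteq> A k" by (auto simp: A_def cliques_in_def)
  qed
  then show ?thesis using grow[OF K0 order_refl] by (simp add: k_def power_mult_distrib)
qed

end

theorem proposition4p3:
  fixes V :: "'a set" and E :: "'a \<Rightarrow> 'a \<Rightarrow> bool" and r :: nat and \<epsilon> :: real
  assumes "graph V E"
    and "r \<ge> 3"
    and "\<epsilon> > 0"
    and "maximal_Kr_free V E r"
    and "\<forall>v\<in>V. real (degree V E v) \<ge>
           ((2 * real r - 5) / (2 * real r - 3) + \<epsilon>) * real (card V)"
  shows "ultra_maximal_Kr_free (\<epsilon> ^ (r - 2)) V E r"
proof -
  have free: "Kr_free V E r" using assms(4) by (simp add: maximal_Kr_free_def)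
  have sy: "\<And>x y. E x y \<Longrightarrow> E y x" using assms(1) by (simp add: graph_def)
  have ir: "\<And>x. \<not> E x x" using assms(1) by (auto simp: graph_def)
  show ?thesis
    unfolding ultra_maximal_Kr_free_def
  proof (intro conjI ballI impI free)
    fix u v assume uV: "u \<in> V" and vV: "v \<in> V" and uv: "u \<noteq> v" and nuv: "\<not> E u v"
    interpret c: ctx V E r \<epsilon> u v
      using assms free uV vV uv nuv by unfold_locales auto
    have "\<not> Kr_free V (add_edge E u v) r" using assms(4) uV vV uv nuv by (simp add: maximal_Kr_free_def)
    then obtain S where S: "S \<subseteq> V" "card S = r" and Scl: "\<forall>x\<in>S. \<forall>y\<in>S. x \<noteq> y \<longrightarrow> add_edge E u v x y"
      by (auto simp: Kr_free_def cliques_in_def)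
    have uS: "u \<in> S \<and> v \<in> S"
    proof (rule ccontr)
      assume "\<not> (u \<in> S \<and> v \<in> S)"
      then have "\<forall>x\<in>S. \<forall>y\<in>S. x \<noteq> y \<longrightarrow> E x y" using Scl by (auto simp: add_edge_def)
      then show False using c.no_clique S by blast
    qed
    define K0 where "K0 = S - {u, v}"
    have finS: "finite S" using S c.finV finite_subset by blast
    have "K0 \<in> cliques_in E c.W c.k"
    proof -
      have "card K0 = c.k" using uS S finS uv by (simp add: K0_def c.k_def card_Diff_subset)
      moreover have "K0 \<subseteq> c.W"
      proof
        fix x assume x: "x \<in> K0"
        have xS: "x \<in> S" and xu: "u \<noteq> x" and xv: "v \<noteq> x" using x by (auto simp: K0_def)
        have "add_edge E u v u x" using Scl[rule_format, OF conjunct1[OF uS] xS xu] .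
        then have "E u x" using xv uv by (simp add: add_edge_def)
        have "add_edge E u v v x" using Scl[rule_format, OF conjunct2[OF uS] xS xv] .
        then have "E v x" using xu uv by (simp add: add_edge_def)
        note \<open>E u x\<close> \<open>E v x\<close>
        then show "x \<in> c.W" using x S by (auto simp: c.W_def neighbours_def K0_def)
      qed
      moreover have "\<forall>x\<in>K0. \<forall>y\<in>K0. x \<noteq> y \<longrightarrow> E x y"
      proof (intro ballI impI)
        fix x y assume x: "x \<in> K0" and y: "y \<in> K0" and xy: "x \<noteq> y"
        have "x \<in> S" "y \<in> S" "x \<noteq> u" "x \<noteq> v" using x y by (auto simp: K0_def)
        then have "add_edge E u v x y" using Scl xy by blast
        then show "E x y" using \<open>x \<noteq> u\<close> \<open>x \<noteq> v\<close> by (auto simp: add_edge_def)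
      qed
      ultimately show ?thesis by (simp add: cliques_in_def)
    qed
    from c.final[OF this]
    show "\<epsilon> ^ (r - 2) * real (card V) ^ (r - 2)
          \<le> real (card (cliques_in E (neighbours V E u \<inter> neighbours V E v) (r - 2)))"
      by (simp add: c.W_def)
  qed
qed

end
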